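(* There is no polynomial-time algorithm that, given a canonical linear game on players $\{1,\dots,n\}$ as the list of characteristic vectors of its ceiling coalitions, outputs the list of its roof coalitions; and there is no polynomial-time algorithm that, given a canonical linear game as the list of its roof coalitions, outputs the list of its ceiling coalitions. (Here polynomial time means polynomial in the size of the input list.)
   Context: A simple game on $N=\{1,\dots,n\}$ is a map $v:2^N\to\{0,1\}$; it is monotonic if $S\subseteq T\Rightarrow v(S)\le v(T)$. Write $i\succeq j$ if $v(S\cup\{i\})\ge v(S\cup\{j\})$ for all $S\subseteq N\setminus\{i,j\}$; a canonical linear game is a monotonic simple game with $1\succeq2\succeq\cdots\succeq n$. A coalition $S'$ is a direct left-shift of $S$ if there is $m\in S$, $2\le m\le n$, $m-1\notin S$, with $S'=(S\setminus\{m\})\cup\{m-1\}$; a left-shift is obtained by one or more successive direct left-shifts; right-shifts are defined symmetrically. A roof coalition is a minimal winning coalition all of whose right-shifts are losing; a ceiling coalition is a maximal losing coalition all of whose left-shifts are winning. A canonical linear game is determined by its list of roofs, and also by its list of ceilings. A coalition $S$ is encoded by its characteristic vector in $\{0,1\}^n$. *)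

theory Defs
  imports Main
begin

text \<open>A simple game on N = {1..n} is a predicate v on coalitions; only its values on
  subsets of {1..n} are relevant.\<close>

definition monotonic_game :: "nat \<Rightarrow> (nat set \<Rightarrow> bool) \<Rightarrow> bool" where
  "monotonic_game n v \<longleftrightarrow> (\<forall>S T. S \<subseteq> T \<and> T \<subseteq> {1..n} \<and> v S \<longrightarrow> v T)"

definition desirable :: "nat \<Rightarrow> (nat set \<Rightarrow> bool) \<Rightarrow> nat \<Rightarrow> nat \<Rightarrow> bool" where
  "desirable n v i j \<longleftrightarrow>
     (\<forall>S. S \<subseteq> {1..n} - {i, j} \<longrightarrow> (v (S \<union> {j}) \<longrightarrow> v (S \<union> {i})))"

definition canonical_linear :: "nat \<Rightarrow> (nat set \<Rightarrow> bool) \<Rightarrow> bool" where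
  "canonical_linear n v \<longleftrightarrow> monotonic_game n v \<and>
     (\<forall>i j. 1 \<le> i \<and> i \<le> j \<and> j \<le> n \<longrightarrow> desirable n v i j)"

definition direct_left_shift :: "nat \<Rightarrow> nat set \<Rightarrow> nat set \<Rightarrow> bool" where
  "direct_left_shift n S S' \<longleftrightarrow>
     (\<exists>m\<in>S. 2 \<le> m \<and> m \<le> n \<and> m - 1 \<notin> S \<and> S' = (S - {m}) \<union> {m - 1})"

definition direct_right_shift :: "nat \<Rightarrow> nat set \<Rightarrow> nat set \<Rightarrow> bool" where
  "direct_right_shift n S S' \<longleftrightarrow>
     (\<exists>m\<in>S. 1 \<le> m \<and> m + 1 \<le> n \<and> m + 1 \<notin> S \<and> S' = (S - {m}) \<union> {m + 1})"

definition left_shift :: "nat \<Rightarrow> nat set \<Rightarrow> nat set \<Rightarrow> bool" where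
  "left_shift n = (direct_left_shift n)\<^sup>+\<^sup>+"

definition right_shift :: "nat \<Rightarrow> nat set \<Rightarrow> nat set \<Rightarrow> bool" where
  "right_shift n = (direct_right_shift n)\<^sup>+\<^sup>+"

definition minimal_winning :: "nat \<Rightarrow> (nat set \<Rightarrow> bool) \<Rightarrow> nat set \<Rightarrow> bool" where
  "minimal_winning n v S \<longleftrightarrow> S \<subseteq> {1..n} \<and> v S \<and> (\<forall>T. T \<subset> S \<longrightarrow> \<not> v T)"

definition maximal_losing :: "nat \<Rightarrow> (nat set \<Rightarrow> bool) \<Rightarrow> nat set \<Rightarrow> bool" where
  "maximal_losing n v S \<longleftrightarrow> S \<subseteq> {1..n} \<and> \<not> v S \<and>
     (\<forall>T. S \<subset> T \<and> T \<subseteq> {1..n} \<longrightarrow> v T)"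

definition roofs :: "nat \<Rightarrow> (nat set \<Rightarrow> bool) \<Rightarrow> nat set set" where
  "roofs n v = {S. minimal_winning n v S \<and> (\<forall>S'. right_shift n S S' \<longrightarrow> \<not> v S')}"

definition ceilings :: "nat \<Rightarrow> (nat set \<Rightarrow> bool) \<Rightarrow> nat set set" where
  "ceilings n v = {S. maximal_losing n v S \<and> (\<forall>S'. left_shift n S S' \<longrightarrow> v S')}"

text \<open>Characteristic vector of a coalition S of {1..n}: entry k (0-based) is [k+1 \<in> S].\<close>
definition charvec :: "nat \<Rightarrow> nat set \<Rightarrow> bool list" where
  "charvec n S = map (\<lambda>i. i \<in> S) [1..<n+1]"

text \<open>A deterministic sequential machine with arbitrary state space and arbitrary
  (unit-cost) local steps, which writes at most one output symbol per step.
  Every standard model (Turing machines, RAMs) is an instance, so impossibility of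
  polynomial time here implies impossibility of polynomial time there.\<close>

datatype sym = Zero | One | Sep

record 's machine =
  init :: "nat \<times> bool list list \<Rightarrow> 's"
  step :: "'s \<Rightarrow> 's \<times> sym option"
  final :: "'s \<Rightarrow> bool"

fun config :: "'s machine \<Rightarrow> nat \<times> bool list list \<Rightarrow> nat \<Rightarrow> 's" where
  "config M x 0 = init M x"
| "config M x (Suc t) = fst (step M (config M x t))"

fun outputs :: "'s machine \<Rightarrow> nat \<times> bool list list \<Rightarrow> nat \<Rightarrow> sym list" where
  "outputs M x 0 = []"
| "outputs M x (Suc t) = outputs M x t @
     (case snd (step M (config M x t)) of None \<Rightarrow> [] | Some s \<Rightarrow> [s])"

definition encode :: "bool list list \<Rightarrow> sym list" where
  "encode L = concat (map (\<lambda>v. map (\<lambda>b. if b then One else Zero) v @ [Sep]) L)"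

definition input_size :: "nat \<times> bool list list \<Rightarrow> nat" where
  "input_size x = fst x + sum_list (map length (snd x))"

definition outputs_within :: "'s machine \<Rightarrow> nat \<times> bool list list \<Rightarrow> nat \<Rightarrow> bool list set \<Rightarrow> bool" where
  "outputs_within M x T R \<longleftrightarrow>
     (\<exists>t\<le>T. final M (config M x t) \<and> (\<exists>L. outputs M x t = encode L \<and> set L = R))"

definition poly_ceilings_to_roofs :: "'s machine \<Rightarrow> bool" where
  "poly_ceilings_to_roofs M \<longleftrightarrow> (\<exists>c d::nat. \<forall>n v L.
     canonical_linear n v \<and> distinct L \<and> set L = charvec n ` ceilings n v \<longrightarrow>
     outputs_within M (n, L) (c * (input_size (n, L) + 1) ^ d) (charvec n ` roofs n v))"

definition poly_roofs_to_ceilings :: "'s machine \<Rightarrow> bool" where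
  "poly_roofs_to_ceilings M \<longleftrightarrow> (\<exists>c d::nat. \<forall>n v L.
     canonical_linear n v \<and> distinct L \<and> set L = charvec n ` roofs n v \<longrightarrow>
     outputs_within M (n, L) (c * (input_size (n, L) + 1) ^ d) (charvec n ` ceilings n v))"

end

theory Submission imports Defs "HOL-Real_Asymp.Real_Asymp" begin

primrec pc :: "nat set \<Rightarrow> nat \<Rightarrow> nat" where
  "pc S 0 = 0"
| "pc S (Suc j) = pc S j + (if Suc j \<in> S then 1 else 0)"

definition dm :: "nat set \<Rightarrow> nat set \<Rightarrow> bool" where
  "dm S T \<longleftrightarrow> (\<forall>j. pc T j \<le> pc S j)"

lemma pc_mono: "a \<le> b \<Longrightarrow> pc S a \<le> pc S b"
  by (induction b) (auto simp: le_Suc_eq)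

lemma pc_le_add: "a \<le> b \<Longrightarrow> pc S b \<le> pc S a + (b - a)"
  by (induction b) (auto simp: le_Suc_eq)

lemma pc_run_in: "a \<le> b \<Longrightarrow> (\<forall>q. a < q \<and> q \<le> b \<longrightarrow> q \<in> S) \<Longrightarrow> pc S b = pc S a + (b - a)"
  by (induction b) (auto simp: le_Suc_eq Suc_diff_le)

lemma pc_run_out: "a \<le> b \<Longrightarrow> (\<forall>q. a < q \<and> q \<le> b \<longrightarrow> q \<notin> S) \<Longrightarrow> pc S b = pc S a"
  by (induction b) (auto simp: le_Suc_eq)

lemma pc_subset: "S \<subseteq> T \<Longrightarrow> pc S j \<le> pc T j"
  by (induction j) auto

lemma pc_beyond: "S \<subseteq> {1..n} \<Longrightarrow> n \<le> j \<Longrightarrow> pc S j = pc S n"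
  by (rule pc_run_out) auto

lemma pc_Suc_le: "pc S (Suc j) \<le> Suc (pc S j)"
  by simp

lemma pc_eq: assumes "0 \<notin> S" "0 \<notin> T" "\<forall>j. pc S j = pc T j" shows "S = T"
proof -
  have "x \<in> S \<longleftrightarrow> x \<in> T" for x
  proof (cases x)
    case 0 then show ?thesis using assms by auto
  next
    case (Suc k)
    have a: "pc S (Suc k) = pc T (Suc k)" "pc S k = pc T k" using assms(3) by blast+
    have "(if Suc k \<in> S then 1 else 0) = (if Suc k \<in> T then 1 else (0::nat))"
      using a unfolding pc.simps by linarith
    then show ?thesis using Suc by (auto split: if_splits)
  qed
  then show ?thesis by auto
qed

lemma pc_insert: "0 < i \<Longrightarrow> i \<notin> S \<Longrightarrow> pc (insert i S) p = pc S p + (if i \<le> p then 1 else 0)"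
  by (induction p) (auto simp: le_Suc_eq)

lemma pc_remove: "i \<in> S \<Longrightarrow> 0 < i \<Longrightarrow> pc (S - {i}) p + (if i \<le> p then 1 else 0) = pc S p"
  by (induction p) (auto simp: le_Suc_eq)

lemma pc_lshift: "m \<in> S \<Longrightarrow> m - 1 \<notin> S \<Longrightarrow> 2 \<le> m \<Longrightarrow>
   pc (S - {m} \<union> {m - 1}) p = pc S p + (if p = m - 1 then 1 else 0)"
  by (induction p) (auto simp: le_Suc_eq)

lemma pc_rshift: "m \<in> S \<Longrightarrow> m + 1 \<notin> S \<Longrightarrow> 1 \<le> m \<Longrightarrow>
   pc (S - {m} \<union> {m + 1}) p + (if p = m then 1 else 0) = pc S p"
  by (induction p) (auto simp: le_Suc_eq split: if_splits)


lemma dm_refl: "dm S S" by (simp add: dm_def)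
lemma dm_trans: "dm S T \<Longrightarrow> dm T U \<Longrightarrow> dm S U" unfolding dm_def using le_trans by blast

definition sdm :: "nat set \<Rightarrow> nat set \<Rightarrow> bool" where
  "sdm S T \<longleftrightarrow> dm S T \<and> (\<exists>j. pc T j < pc S j)"

lemma sdm_neq: "sdm S T \<Longrightarrow> S \<noteq> T" unfolding sdm_def by auto

lemma sdm_trans: "sdm S T \<Longrightarrow> sdm T U \<Longrightarrow> sdm S U"
  unfolding sdm_def dm_def by (meson le_less_trans le_trans)

lemma dls_sdm: assumes "direct_left_shift n S S'" "S \<subseteq> {1..n}"
  shows "sdm S' S \<and> S' \<subseteq> {1..n}"
proof -
  obtain m where m: "m \<in> S" "2 \<le> m" "m \<le> n" "m - 1 \<notin> S" "S' = (S - {m}) \<union> {m - 1}"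
    using assms(1) unfolding direct_left_shift_def by blast
  have e: "pc S' p = pc S p + (if p = m - 1 then 1 else 0)" for p
    using pc_lshift[OF m(1) m(4) m(2)] m(5) by simp
  have "dm S' S" unfolding dm_def using e by simp
  moreover have "pc S (m - 1) < pc S' (m - 1)" using e by simp
  moreover have "S' \<subseteq> {1..n}" using m assms(2) by auto
  ultimately show ?thesis unfolding sdm_def by blast
qed

lemma drs_sdm: assumes "direct_right_shift n S S'" "S \<subseteq> {1..n}"
  shows "sdm S S' \<and> S' \<subseteq> {1..n}"
proof -
  obtain m where m: "m \<in> S" "1 \<le> m" "m + 1 \<le> n" "m + 1 \<notin> S" "S' = (S - {m}) \<union> {m + 1}"
    using assms(1) unfolding direct_right_shift_def by blast
  have e: "pc S' p + (if p = m then 1 else 0) = pc S p" for p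
    using pc_rshift[OF m(1) m(4) m(2)] m(5) by simp
  have "dm S S'" unfolding dm_def using e by (metis le_add1)
  moreover have "pc S' m < pc S m" using e[of m] by simp
  moreover have "S' \<subseteq> {1..n}" using m assms(2) by auto
  ultimately show ?thesis unfolding sdm_def by blast
qed

lemma ls_sdm: assumes "left_shift n S S'" "S \<subseteq> {1..n}"
  shows "sdm S' S \<and> S' \<subseteq> {1..n}"
  using assms(1)[unfolded left_shift_def] assms(2)
proof (induction rule: tranclp_induct)
  case (base y) then show ?case using dls_sdm by blast
next
  case (step y z) then show ?case using dls_sdm sdm_trans by blast
qed

lemma rs_sdm: assumes "right_shift n S S'" "S \<subseteq> {1..n}"
  shows "sdm S S' \<and> S' \<subseteq> {1..n}"
  using assms(1)[unfolded right_shift_def] assms(2)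
proof (induction rule: tranclp_induct)
  case (base y) then show ?case using drs_sdm by blast
next
  case (step y z) then show ?case using drs_sdm sdm_trans by blast
qed

lemma subset_dm: "S \<subseteq> T \<Longrightarrow> dm T S" unfolding dm_def using pc_subset by blast

lemma canon:
  assumes "\<And>S T. dm T S \<Longrightarrow> P S \<Longrightarrow> P T"
  shows "canonical_linear n (\<lambda>S. S \<subseteq> {1..n} \<and> P S)"
proof -
  have m: "monotonic_game n (\<lambda>S. S \<subseteq> {1..n} \<and> P S)"
    unfolding monotonic_game_def using assms subset_dm by blast
  have d: "desirable n (\<lambda>S. S \<subseteq> {1..n} \<and> P S) i j" if h: "1 \<le> i \<and> i \<le> j \<and> j \<le> n" for i j
    unfolding desirable_def
  proof (intro allI impI)
    fix S assume h2: "S \<subseteq> {1..n} - {i, j}" and h3: "S \<union> {j} \<subseteq> {1..n} \<and> P (S \<union> {j})"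
    have ni: "i \<notin> S" "j \<notin> S" "0 < i" "0 < j" using h h2 by auto
    have "pc (insert j S) p \<le> pc (insert i S) p" for p
      using pc_insert[OF ni(3) ni(1), of p] pc_insert[OF ni(4) ni(2), of p] h by simp
    then have "dm (insert i S) (insert j S)" unfolding dm_def by blast
    then show "S \<union> {i} \<subseteq> {1..n} \<and> P (S \<union> {i})" using h h2 h3 assms by auto
  qed
  show ?thesis unfolding canonical_linear_def using m d by blast
qed

lemma pc_ex_diff: assumes "S \<subseteq> {1..n}" "T \<subseteq> {1..n}" "dm T S" "T \<noteq> S"
  shows "\<exists>j. pc S j < pc T j"
proof (rule ccontr)
  assume "\<not> ?thesis"
  then have "\<forall>j. pc S j = pc T j" using assms(3) unfolding dm_def by (meson le_neq_implies_less)
  moreover have "0 \<notin> S" "0 \<notin> T" using assms by auto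
  ultimately show False using pc_eq assms(4) by metis
qed

lemma upper_cover:
  assumes S: "S \<subseteq> {1..n}" and T: "T \<subseteq> {1..n}" and d: "dm T S" and ne: "T \<noteq> S"
  shows "\<exists>S'. ((S \<subset> S' \<and> S' \<subseteq> {1..n}) \<or> direct_left_shift n S S') \<and> dm T S'"
proof -
  define j where "j = (LEAST j. pc S j < pc T j)"
  have j: "pc S j < pc T j" using pc_ex_diff[OF S T d ne] unfolding j_def by (rule LeastI_ex)
  have jmin: "\<not> pc S k < pc T k" if "k < j" for k using that unfolding j_def by (rule not_less_Least)
  obtain i where i: "j = Suc i" using j by (cases j) auto
  have eqi: "pc S i = pc T i" using jmin[of i] d i unfolding dm_def by (meson le_neq_implies_less lessI)
  have inT: "Suc i \<in> T" and ninS: "Suc i \<notin> S" using j eqi i by (auto split: if_splits)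
  have iln: "Suc i \<le> n" using inT T by auto
  show ?thesis
  proof (cases "\<exists>m\<in>S. Suc i < m")
    case True
    define m where "m = (LEAST m. m \<in> S \<and> Suc i < m)"
    have m: "m \<in> S \<and> Suc i < m" using True unfolding m_def by (metis (mono_tags, lifting) LeastI_ex)
    have mmin: "q \<notin> S" if "Suc i < q" "q < m" for q
      using that unfolding m_def using not_less_Least by blast
    have mn: "m \<le> n" using m S by auto
    have m1: "m - 1 \<notin> S" using mmin ninS m by (cases "m - 1 = Suc i") auto
    define S' where "S' = (S - {m}) \<union> {m - 1}"
    have dls: "direct_left_shift n S S'" unfolding direct_left_shift_def S'_def
      using m mn m1 by (intro bexI[of _ m]) auto
    have e: "pc S' p = pc S p + (if p = m - 1 then 1 else 0)" for p
      using pc_lshift[of m S p] m m1 unfolding S'_def by simp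
    have r: "pc S (m - 1) = pc S (Suc i)" using mmin m by (intro pc_run_out) auto
    have "pc T (Suc i) \<le> pc T (m - 1)" using m by (intro pc_mono) auto
    then have "pc S (m - 1) + 1 \<le> pc T (m - 1)" using r eqi j i by simp
    then have "dm T S'" unfolding dm_def using e d[unfolded dm_def] by simp
    then show ?thesis using dls by blast
  next
    case False
    define S' where "S' = insert (Suc i) S"
    have sub: "S \<subset> S' \<and> S' \<subseteq> {1..n}" unfolding S'_def using ninS iln S by auto
    have e: "pc S' p = pc S p + (if Suc i \<le> p then 1 else 0)" for p
      unfolding S'_def using pc_insert ninS by simp
    have "pc S p + 1 \<le> pc T p" if "Suc i \<le> p" for p
    proof -
      have "pc S p = pc S (Suc i)" using False that by (intro pc_run_out) auto
      moreover have "pc T (Suc i) \<le> pc T p" using that by (rule pc_mono)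
      ultimately show ?thesis using eqi j i by simp
    qed
    then have "dm T S'" unfolding dm_def using e d[unfolded dm_def] by simp
    then show ?thesis using sub by blast
  qed
qed

lemma lower_cover:
  assumes S: "S \<subseteq> {1..n}" and R: "R \<subseteq> {1..n}" and d: "dm S R" and ne: "S \<noteq> R"
  shows "\<exists>S'. (S' \<subset> S \<or> direct_right_shift n S S') \<and> dm S' R"
proof -
  define j where "j = (LEAST j. pc R j < pc S j)"
  have j: "pc R j < pc S j" using pc_ex_diff[OF R S d ne] unfolding j_def by (rule LeastI_ex)
  have jmin: "\<not> pc R k < pc S k" if "k < j" for k using that unfolding j_def by (rule not_less_Least)
  obtain i where i: "j = Suc i" using j by (cases j) auto
  have eqi: "pc R i = pc S i" using jmin[of i] d i unfolding dm_def by (meson le_neq_implies_less lessI)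
  have inS: "Suc i \<in> S" and ninR: "Suc i \<notin> R" using j eqi i by (auto split: if_splits)
  have iln: "Suc i \<le> n" using inS S by auto
  have ex: "\<exists>p. Suc i < p \<and> p \<notin> S" using S iln by (intro exI[of _ "Suc n"]) auto
  define p where "p = (LEAST p. Suc i < p \<and> p \<notin> S)"
  have p: "Suc i < p \<and> p \<notin> S" using ex unfolding p_def by (metis (mono_tags, lifting) LeastI_ex)
  have pmin: "q \<in> S" if "Suc i < q" "q < p" for q
    using that unfolding p_def using not_less_Least by blast
  have ple: "p \<le> Suc n" unfolding p_def using S iln by (intro Least_le) auto
  have run: "pc S (p - 1) = pc S i + (p - 1 - i)"
  proof (rule pc_run_in)
    show "i \<le> p - 1" using p by linarith
    show "\<forall>q. i < q \<and> q \<le> p - 1 \<longrightarrow> q \<in> S"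
    proof (intro allI impI)
      fix q assume "i < q \<and> q \<le> p - 1"
      then show "q \<in> S" using pmin[of q] inS p by (cases "q = Suc i") auto
    qed
  qed
  have Rb: "pc R q \<le> pc R i + (q - Suc i)" if "Suc i \<le> q" for q
    using pc_le_add[OF that, of R] ninR by simp
  show ?thesis
  proof (cases "p \<le> n")
    case True
    define m where "m = p - 1"
    have mge: "Suc i \<le> m" "m + 1 = p" using p unfolding m_def by auto
    have mS: "m \<in> S"
    proof (cases "m = Suc i")
      case True then show ?thesis using inS by simp
    next
      case False then show ?thesis using pmin[of m] mge by simp
    qed
    have m: "m \<in> S" "1 \<le> m" "m + 1 \<le> n" "m + 1 \<notin> S"
      using mS mge p True by auto
    define S' where "S' = (S - {m}) \<union> {m + 1}"
    have drs: "direct_right_shift n S S'" unfolding direct_right_shift_def S'_def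
      using m by (intro bexI[of _ m]) auto
    have e: "pc S' q + (if q = m then 1 else 0) = pc S q" for q
      using pc_rshift[of m S q] m unfolding S'_def by simp
    have run': "pc S m = pc S i + (m - i)" using run unfolding m_def .
    have "pc R m + 1 \<le> pc S m" using Rb[OF mge(1)] run' mge(1) eqi by arith
    then have "pc R q \<le> pc S' q" for q using e[of q] d[unfolded dm_def, rule_format, of q]
      by (cases "q = m") auto
    then have "dm S' R" unfolding dm_def by blast
    then show ?thesis using drs by blast
  next
    case False
    then have pn: "p = Suc n" using ple by simp
    have nS: "n \<in> S" using pn pmin inS iln by (cases "n = Suc i") auto
    define S' where "S' = S - {n}"
    have sub: "S' \<subset> S" unfolding S'_def using nS by auto
    have e: "pc S' q + (if n \<le> q then 1 else 0) = pc S q" for q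
      unfolding S'_def using pc_remove[of n S q] nS iln by simp
    have hq: "pc R q + 1 \<le> pc S q" if "n \<le> q" for q
    proof -
      have "pc S q = pc S n" "pc R q = pc R n" using S R that pc_beyond by blast+
      then show ?thesis using Rb[of n] run pn eqi iln by simp
    qed
    have "pc R q \<le> pc S' q" for q using e[of q] d[unfolded dm_def, rule_format, of q] hq[of q]
      by (cases "n \<le> q") auto
    then have "dm S' R" unfolding dm_def by blast
    then show ?thesis using sub by blast
  qed
qed


lemma pc_from_fun:
  fixes f :: "nat \<Rightarrow> nat"
  assumes "f 0 = 0" "\<And>j. f j \<le> f (Suc j)" "\<And>j. f (Suc j) \<le> Suc (f j)"
  shows "pc {Suc i |i. f i < f (Suc i)} j = f j"
proof (induction j)
  case 0 then show ?case using assms by simp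
next
  case (Suc j)
  have "(Suc j \<in> {Suc i |i. f i < f (Suc i)}) = (f j < f (Suc j))" by auto
  then show ?case using Suc assms(2)[of j] assms(3)[of j] by simp
qed

lemma join_ex:
  assumes "S \<subseteq> {1..n}" "S' \<subseteq> {1..n}"
  shows "\<exists>J. J \<subseteq> {1..n} \<and> (\<forall>j. pc J j = max (pc S j) (pc S' j))"
proof -
  define f where "f j = max (pc S j) (pc S' j)" for j
  define J where "J = {Suc i |i. f i < f (Suc i)}"
  have pcJ: "pc J j = f j" for j unfolding J_def
    by (rule pc_from_fun) (auto simp: f_def)
  have "J \<subseteq> {1..n}"
  proof
    fix x assume "x \<in> J"
    then obtain i where i: "x = Suc i" "f i < f (Suc i)" unfolding J_def by blast
    have "i < n"
    proof (rule ccontr)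
      assume "\<not> i < n"
      then have "pc S (Suc i) = pc S i" "pc S' (Suc i) = pc S' i"
        using pc_beyond[OF assms(1)] pc_beyond[OF assms(2)] by (metis le_SucI not_less)+
      then show False using i(2) unfolding f_def by simp
    qed
    then show "x \<in> {1..n}" using i by simp
  qed
  then show ?thesis using pcJ unfolding f_def by blast
qed

lemma meet_ex:
  assumes "S \<subseteq> {1..n}" "S' \<subseteq> {1..n}"
  shows "\<exists>J. J \<subseteq> {1..n} \<and> (\<forall>j. pc J j = min (pc S j) (pc S' j))"
proof -
  define f where "f j = min (pc S j) (pc S' j)" for j
  define J where "J = {Suc i |i. f i < f (Suc i)}"
  have pcJ: "pc J j = f j" for j unfolding J_def
    by (rule pc_from_fun) (auto simp: f_def)
  have "J \<subseteq> {1..n}"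
  proof
    fix x assume "x \<in> J"
    then obtain i where i: "x = Suc i" "f i < f (Suc i)" unfolding J_def by blast
    have "i < n"
    proof (rule ccontr)
      assume "\<not> i < n"
      then have "pc S (Suc i) = pc S i" "pc S' (Suc i) = pc S' i"
        using pc_beyond[OF assms(1)] pc_beyond[OF assms(2)] by (metis le_SucI not_less)+
      then show False using i(2) unfolding f_def by simp
    qed
    then show "x \<in> {1..n}" using i by simp
  qed
  then show ?thesis using pcJ unfolding f_def by blast
qed

lemma few:
  assumes "finite C" "\<And>S. S \<in> F \<Longrightarrow> \<exists>c\<in>C. P c S"
    "\<And>c S S'. c \<in> C \<Longrightarrow> S \<in> F \<Longrightarrow> S' \<in> F \<Longrightarrow> P c S \<Longrightarrow> P c S' \<Longrightarrow> S = S'"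
  shows "card F \<le> card C"
proof -
  define g where "g S = (SOME c. c \<in> C \<and> P c S)" for S
  have g: "g S \<in> C \<and> P (g S) S" if "S \<in> F" for S
    unfolding g_def using assms(2)[OF that] by (metis (mono_tags, lifting) someI_ex)
  have "inj_on g F" by (rule inj_onI) (metis g assms(3))
  moreover have "g ` F \<subseteq> C" using g by blast
  ultimately show ?thesis using assms(1) card_inj_on_le by blast
qed

section \<open>The antichain\<close>

definition A :: "nat \<Rightarrow> nat set \<Rightarrow> nat set" where
  "A m X = {p. \<exists>i<m. (i \<in> X \<and> (p = 4*i+1 \<or> p = 4*i+4)) \<or> (i \<notin> X \<and> (p = 4*i+2 \<or> p = 4*i+3))}"

lemma A_sub: "A m X \<subseteq> {1..4*m}" unfolding A_def by auto

lemma blk: "4*(k::nat) + a = 4*i + b \<Longrightarrow> 1 \<le> a \<Longrightarrow> a \<le> 4 \<Longrightarrow> 1 \<le> b \<Longrightarrow> b \<le> 4 \<Longrightarrow> k = i \<and> a = b"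
proof -
  assume h: "4*(k::nat) + a = 4*i + b" "1 \<le> a" "a \<le> 4" "1 \<le> b" "b \<le> 4"
  have "\<not> k < i"
  proof
    assume "k < i" then have "k + 1 \<le> i" by simp
    then show False using h by linarith
  qed
  moreover have "\<not> i < k"
  proof
    assume "i < k" then have "i + 1 \<le> k" by simp
    then show False using h by linarith
  qed
  ultimately have ki: "k = i" by simp
  then have "a = b" using h(1) by linarith
  then show ?thesis using ki by blast
qed

lemma A_mem:
  assumes "i < m" "1 \<le> b" "b \<le> 4"
  shows "4*i + b \<in> A m X \<longleftrightarrow> (if i \<in> X then b = 1 \<or> b = 4 else b = 2 \<or> b = 3)"
proof
  assume "4*i + b \<in> A m X"
  then obtain k where k: "k < m" "(k \<in> X \<and> (4*i+b = 4*k+1 \<or> 4*i+b = 4*k+4)) \<or> (k \<notin> X \<and> (4*i+b = 4*k+2 \<or> 4*i+b = 4*k+3))"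
    unfolding A_def by blast
  then show "(if i \<in> X then b = 1 \<or> b = 4 else b = 2 \<or> b = 3)"
    using blk[of k 1 i b] blk[of k 4 i b] blk[of k 2 i b] blk[of k 3 i b] assms by auto
next
  assume "(if i \<in> X then b = 1 \<or> b = 4 else b = 2 \<or> b = 3)"
  then show "4*i + b \<in> A m X" unfolding A_def using assms by (cases "i \<in> X") auto
qed

definition off :: "bool \<Rightarrow> nat \<Rightarrow> nat" where
  "off b r = (if b then (if r = 0 then 0 else if r \<le> 3 then 1 else 2)
              else (if r \<le> 1 then 0 else if r = 2 then 1 else 2))"

lemma pcA_blk:
  assumes "i < m"
  shows "pc (A m X) (4*i) = 2*i \<Longrightarrow> r \<le> 4 \<Longrightarrow> pc (A m X) (4*i + r) = 2*i + off (i \<in> X) r"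
proof (induction r)
  case 0 then show ?case by (simp add: off_def)
next
  case (Suc r)
  have "Suc (4*i + r) \<in> A m X \<longleftrightarrow> (if i \<in> X then Suc r = 1 \<or> Suc r = 4 else Suc r = 2 \<or> Suc r = 3)"
    using A_mem[OF assms, of "Suc r" X] Suc.prems by simp
  then show ?case using Suc by (auto simp: off_def)
qed

lemma pcA_4: "i \<le> m \<Longrightarrow> pc (A m X) (4*i) = 2*i"
proof (induction i)
  case 0 then show ?case by simp
next
  case (Suc i)
  then have a: "pc (A m X) (4*i + 4) = 2*i + off (i \<in> X) 4" using pcA_blk[of i m] by simp
  have e: "4 * Suc i = 4*i + 4" by simp
  have o: "off (i \<in> X) 4 = 2" by (simp add: off_def)
  show ?case unfolding e a o by simp
qed

lemma pcA: "i < m \<Longrightarrow> r \<le> 4 \<Longrightarrow> pc (A m X) (4*i + r) = 2*i + off (i \<in> X) r"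
proof -
  assume h: "i < m" "r \<le> 4"
  have "i \<le> m" using h by simp
  then show ?thesis using pcA_blk[OF h(1) pcA_4 h(2)] by blast
qed

lemma pcA_big: "4*m \<le> j \<Longrightarrow> pc (A m X) j = 2*m"
proof -
  assume "4*m \<le> j"
  then have "pc (A m X) j = pc (A m X) (4*m)" using pc_beyond[OF A_sub] by blast
  then show ?thesis using pcA_4[of m m X] by simp
qed

lemma A_inj: "inj_on (A m) (Pow {..<m})"
proof (rule inj_onI)
  fix X Y assume h: "X \<in> Pow {..<m}" "Y \<in> Pow {..<m}" "A m X = A m Y"
  have "i \<in> X \<longleftrightarrow> i \<in> Y" if "i < m" for i
  proof -
    have "4*i+1 \<in> A m X \<longleftrightarrow> i \<in> X" using A_mem[OF that, of 1 X] by (cases "i \<in> X") auto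
    moreover have "4*i+1 \<in> A m Y \<longleftrightarrow> i \<in> Y" using A_mem[OF that, of 1 Y] by (cases "i \<in> Y") auto
    ultimately show ?thesis using h(3) by simp
  qed
  then show "X = Y" using h by auto
qed

lemma card_A: "card (A m ` Pow {..<m}) = 2^m"
  using card_image[OF A_inj] by (simp add: card_Pow)


section \<open>Game 1\<close>

definition P1 :: "nat \<Rightarrow> nat set \<Rightarrow> bool" where
  "P1 m S \<longleftrightarrow> (\<forall>i<m. 2*i+2 \<le> pc S (4*i+4) \<and> (2*i+1 \<le> pc S (4*i+1) \<or> 2*i+2 \<le> pc S (4*i+3)))"

definition v1 :: "nat \<Rightarrow> nat set \<Rightarrow> bool" where
  "v1 m = (\<lambda>S. S \<subseteq> {1..4*m} \<and> P1 m S)"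

lemma P1_mono: "dm T S \<Longrightarrow> P1 m S \<Longrightarrow> P1 m T"
  unfolding P1_def dm_def by (meson le_trans)

lemma v1_canon: "canonical_linear (4*m) (v1 m)"
  unfolding v1_def by (rule canon) (rule P1_mono)

lemma pc_low: "i \<le> m \<Longrightarrow> P1 m T \<Longrightarrow> 2*i \<le> pc T (4*i)"
proof (cases i)
  case (Suc k)
  assume "i \<le> m" "P1 m T"
  then have "2*k+2 \<le> pc T (4*k+4)" using Suc unfolding P1_def by auto
  moreover have "4*i = 4*k+4" "2*i = 2*k+2" using Suc by simp_all
  ultimately show ?thesis by metis
qed simp

lemma key1:
  assumes T: "T \<subseteq> {1..4*m}" and P: "P1 m T" and d: "dm (A m X) T"
  shows "T = A m X"
proof -
  have ge: "pc (A m X) j \<le> pc T j" for j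
  proof (cases "4*m \<le> j")
    case True
    have "2*m \<le> pc T (4*m)" using pc_low[OF _ P] by simp
    moreover have "pc T (4*m) \<le> pc T j" using True by (rule pc_mono)
    ultimately show ?thesis using pcA_big[OF True] by simp
  next
    case False
    define i where "i = j div 4"
    define r where "r = j mod 4"
    have j: "j = 4*i + r" "r < 4" "i < m" using False unfolding i_def r_def by auto
    have L0: "2*i \<le> pc T (4*i)" using pc_low[OF _ P] j by simp
    have c: "2*i+2 \<le> pc T (4*i+4)" "2*i+1 \<le> pc T (4*i+1) \<or> 2*i+2 \<le> pc T (4*i+3)"
      using P j unfolding P1_def by auto
    have u: "pc T (4*i+r) \<le> 2*i + off (i \<in> X) r" if "r \<le> 4" for r
      using d pcA[OF j(3) that, of X] unfolding dm_def by metis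
    have m1: "pc T (4*i) \<le> pc T (4*i+1)" "pc T (4*i+1) \<le> pc T (4*i+2)" "pc T (4*i+2) \<le> pc T (4*i+3)"
      by (rule pc_mono; simp)+
    have s: "pc T (4*i+3) \<le> pc T (4*i+2) + 1" by (simp add: numeral_eq_Suc)
    show ?thesis
    proof (cases "i \<in> X")
      case True
      have "pc T (4*i+3) \<le> 2*i+1" using u[of 3] True by (simp add: off_def)
      then have "2*i+1 \<le> pc T (4*i+1)" using c(2) by simp
      moreover have "r = 0 \<or> r = 1 \<or> r = 2 \<or> r = 3" using j(2) by auto
      ultimately have "2*i + off (i \<in> X) r \<le> pc T (4*i+r)" using True L0 m1 by (auto simp: off_def)
      then show ?thesis using j pcA[OF j(3), of r X] by simp
    next
      case False
      have "pc T (4*i+1) \<le> 2*i" using u[of 1] False by (simp add: off_def)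
      then have "2*i+2 \<le> pc T (4*i+3)" using c(2) by simp
      moreover have "r = 0 \<or> r = 1 \<or> r = 2 \<or> r = 3" using j(2) by auto
      ultimately have "2*i + off (i \<in> X) r \<le> pc T (4*i+r)" using False L0 m1 s by (auto simp: off_def)
      then show ?thesis using j pcA[OF j(3), of r X] by simp
    qed
  qed
  have "\<forall>j. pc T j = pc (A m X) j" using ge d unfolding dm_def by (metis le_antisym)
  then show ?thesis using pc_eq T A_sub[of m X] by (metis atLeastAtMost_iff not_one_le_zero subsetD)
qed


lemma A_roof1: assumes "X \<subseteq> {..<m}" shows "A m X \<in> roofs (4*m) (v1 m)"
proof -
  have PA: "P1 m (A m X)"
    unfolding P1_def
  proof (intro allI impI conjI)
    fix i assume i: "i < m"
    show "2*i+2 \<le> pc (A m X) (4*i+4)" using pcA[OF i, of 4 X] by (simp add: off_def)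
    show "2*i+1 \<le> pc (A m X) (4*i+1) \<or> 2*i+2 \<le> pc (A m X) (4*i+3)"
      using pcA[OF i, of 1 X] pcA[OF i, of 3 X] by (simp add: off_def)
  qed
  have mw: "minimal_winning (4*m) (v1 m) (A m X)"
    unfolding minimal_winning_def
  proof (intro conjI allI impI)
    show "A m X \<subseteq> {1..4*m}" by (rule A_sub)
    show "v1 m (A m X)" using PA A_sub unfolding v1_def by blast
    fix T assume "T \<subset> A m X"
    then show "\<not> v1 m T" using key1[of T m X] subset_dm[of T "A m X"] unfolding v1_def by blast
  qed
  have "\<not> v1 m S'" if "right_shift (4*m) (A m X) S'" for S'
    using rs_sdm[OF that A_sub] key1[of S' m X] sdm_neq unfolding v1_def sdm_def by blast
  then show ?thesis using mw unfolding roofs_def by blast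
qed

lemma roofs1_big: "2^m \<le> card (roofs (4*m) (v1 m))"
proof -
  have "A m ` Pow {..<m} \<subseteq> roofs (4*m) (v1 m)" using A_roof1 by blast
  moreover have "finite (roofs (4*m) (v1 m))"
    by (rule finite_subset[of _ "Pow {1..4*m}"]) (auto simp: roofs_def minimal_winning_def)
  ultimately show ?thesis using card_A card_mono by metis
qed

lemma ceil1_above:
  assumes S: "S \<in> ceilings (4*m) (v1 m)" and T: "T \<subseteq> {1..4*m}" "dm T S" "T \<noteq> S"
  shows "P1 m T"
proof -
  have Ss: "S \<subseteq> {1..4*m}" using S unfolding ceilings_def maximal_losing_def by blast
  obtain S' where S': "(S \<subset> S' \<and> S' \<subseteq> {1..4*m}) \<or> direct_left_shift (4*m) S S'" "dm T S'"
    using upper_cover[OF Ss T] by blast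
  have ml: "\<And>U. S \<subset> U \<and> U \<subseteq> {1..4*m} \<Longrightarrow> v1 m U"
    and ls: "\<And>U. left_shift (4*m) S U \<Longrightarrow> v1 m U"
    using S unfolding ceilings_def maximal_losing_def by blast+
  have "v1 m S'"
  proof (cases "S \<subset> S' \<and> S' \<subseteq> {1..4*m}")
    case True then show ?thesis using ml by blast
  next
    case False
    then have "direct_left_shift (4*m) S S'" using S'(1) by blast
    then show ?thesis using ls unfolding left_shift_def by (blast intro: tranclp.r_into_trancl)
  qed
  then show ?thesis using P1_mono S'(2) unfolding v1_def by blast
qed

definition viol1 :: "nat \<times> bool \<Rightarrow> nat set \<Rightarrow> bool" where
  "viol1 c S = (case c of (i, b) \<Rightarrow>
     (if b then pc S (4*i+1) < 2*i+1 \<and> pc S (4*i+3) < 2*i+2 else pc S (4*i+4) < 2*i+2))"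

lemma ceilings1_small: "card (ceilings (4*m) (v1 m)) \<le> 2*m"
proof -
  have "card (ceilings (4*m) (v1 m)) \<le> card ({..<m} \<times> (UNIV :: bool set))"
  proof (rule few[where P = viol1])
    show "finite ({..<m} \<times> (UNIV :: bool set))" by simp
  next
    fix S assume "S \<in> ceilings (4*m) (v1 m)"
    then have "\<not> P1 m S" unfolding ceilings_def maximal_losing_def v1_def by blast
    then obtain i where "i < m" "\<not> (2*i+2 \<le> pc S (4*i+4) \<and> (2*i+1 \<le> pc S (4*i+1) \<or> 2*i+2 \<le> pc S (4*i+3)))"
      unfolding P1_def by blast
    then show "\<exists>c\<in>{..<m} \<times> (UNIV :: bool set). viol1 c S"
      unfolding viol1_def by (metis (mono_tags, lifting) SigmaI UNIV_I case_prod_conv lessThan_iff not_le)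
  next
    fix c S S' assume h: "c \<in> {..<m} \<times> (UNIV :: bool set)" "S \<in> ceilings (4*m) (v1 m)"
      "S' \<in> ceilings (4*m) (v1 m)" "viol1 c S" "viol1 c S'"
    have Ss: "S \<subseteq> {1..4*m}" "S' \<subseteq> {1..4*m}" using h(2,3) unfolding ceilings_def maximal_losing_def by blast+
    obtain J where J: "J \<subseteq> {1..4*m}" "\<forall>j. pc J j = max (pc S j) (pc S' j)" using join_ex[OF Ss] by blast
    obtain i b where c: "c = (i, b)" by (cases c)
    have vJ: "viol1 c J" using h(4,5) J(2) unfolding viol1_def c by (auto simp del: pc.simps)
    have nP: "\<not> P1 m J" using vJ h(1) unfolding viol1_def P1_def c by (auto simp del: pc.simps split: if_splits)
    have "dm J S" "dm J S'" using J(2) unfolding dm_def by auto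
    then have "J = S" "J = S'" using ceil1_above[OF h(2) J(1)] ceil1_above[OF h(3) J(1)] nP by blast+
    then show "S = S'" by simp
  qed
  then show ?thesis by simp
qed


section \<open>Game 2\<close>

definition P2 :: "nat \<Rightarrow> nat set \<Rightarrow> bool" where
  "P2 m S \<longleftrightarrow> (\<exists>i<m. 2*i+3 \<le> pc S (4*i+4) \<or> (2*i+2 \<le> pc S (4*i+3) \<and> 2*i+1 \<le> pc S (4*i+1)))"

definition v2 :: "nat \<Rightarrow> nat set \<Rightarrow> bool" where
  "v2 m = (\<lambda>S. S \<subseteq> {1..4*m} \<and> P2 m S)"

lemma P2_mono: "dm T S \<Longrightarrow> P2 m S \<Longrightarrow> P2 m T"
  unfolding P2_def dm_def by (meson le_trans)

lemma v2_canon: "canonical_linear (4*m) (v2 m)"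
  unfolding v2_def by (rule canon) (rule P2_mono)

lemma pc_up: "i \<le> m \<Longrightarrow> \<not> P2 m T \<Longrightarrow> pc T (4*i) \<le> 2*i"
proof (cases i)
  case (Suc k)
  assume h: "i \<le> m" "\<not> P2 m T"
  have "k < m" using h Suc by simp
  then have "\<not> 2*k+3 \<le> pc T (4*k+4)" using h(2) unfolding P2_def by blast
  then have "pc T (4*k+4) \<le> 2*k+2" by linarith
  moreover have "4*i = 4*k+4" "2*i = 2*k+2" using Suc by simp_all
  ultimately show ?thesis by metis
qed simp

lemma key2:
  assumes T: "T \<subseteq> {1..4*m}" and P: "\<not> P2 m T" and d: "dm T (A m X)"
  shows "T = A m X"
proof -
  have ge: "pc T j \<le> pc (A m X) j" for j
  proof (cases "4*m \<le> j")
    case True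
    have "pc T (4*m) \<le> 2*m" using pc_up[OF _ P] by simp
    moreover have "pc T j = pc T (4*m)" using True pc_beyond[OF T] by blast
    ultimately show ?thesis using pcA_big[OF True] by simp
  next
    case False
    define i where "i = j div 4"
    define r where "r = j mod 4"
    have j: "j = 4*i + r" "r < 4" "i < m" using False unfolding i_def r_def by auto
    have U0: "pc T (4*i) \<le> 2*i" using pc_up[OF _ P] j by simp
    have c: "pc T (4*i+4) \<le> 2*i+2" "pc T (4*i+3) \<le> 2*i+1 \<or> pc T (4*i+1) \<le> 2*i"
      using P j unfolding P2_def by auto
    have u: "2*i + off (i \<in> X) r \<le> pc T (4*i+r)" if "r \<le> 4" for r
      using d pcA[OF j(3) that, of X] unfolding dm_def by metis
    have m1: "pc T (4*i) \<le> pc T (4*i+1)" "pc T (4*i+1) \<le> pc T (4*i+2)" "pc T (4*i+2) \<le> pc T (4*i+3)"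
       "pc T (4*i+3) \<le> pc T (4*i+4)"
      by (rule pc_mono; simp)+
    have s: "pc T (4*i+2) \<le> pc T (4*i+1) + 1" by (simp add: numeral_eq_Suc)
    show ?thesis
    proof (cases "i \<in> X")
      case True
      have "2*i+1 \<le> pc T (4*i+1)" using u[of 1] True by (simp add: off_def)
      then have "pc T (4*i+3) \<le> 2*i+1" using c(2) by simp
      moreover have "r = 0 \<or> r = 1 \<or> r = 2 \<or> r = 3" using j(2) by auto
      ultimately have "pc T (4*i+r) \<le> 2*i + off (i \<in> X) r" using True U0 m1 by (auto simp: off_def)
      then show ?thesis using j pcA[OF j(3), of r X] by simp
    next
      case False
      have "2*i+2 \<le> pc T (4*i+3)" using u[of 3] False by (simp add: off_def)
      then have "pc T (4*i+1) \<le> 2*i" using c(2) by simp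
      moreover have "r = 0 \<or> r = 1 \<or> r = 2 \<or> r = 3" using j(2) by auto
      ultimately have "pc T (4*i+r) \<le> 2*i + off (i \<in> X) r" using False U0 m1 s c(1) by (auto simp: off_def)
      then show ?thesis using j pcA[OF j(3), of r X] by simp
    qed
  qed
  have "\<forall>j. pc T j = pc (A m X) j" using ge d unfolding dm_def by (metis le_antisym)
  then show ?thesis using pc_eq T A_sub[of m X] by (metis atLeastAtMost_iff not_one_le_zero subsetD)
qed

lemma A_ceil2: assumes "X \<subseteq> {..<m}" shows "A m X \<in> ceilings (4*m) (v2 m)"
proof -
  have PA: "\<not> P2 m (A m X)"
    unfolding P2_def
  proof
    assume "\<exists>i<m. 2*i+3 \<le> pc (A m X) (4*i+4) \<or> (2*i+2 \<le> pc (A m X) (4*i+3) \<and> 2*i+1 \<le> pc (A m X) (4*i+1))"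
    then obtain i where i: "i < m" "2*i+3 \<le> pc (A m X) (4*i+4) \<or> (2*i+2 \<le> pc (A m X) (4*i+3) \<and> 2*i+1 \<le> pc (A m X) (4*i+1))"
      by blast
    then show False using pcA[OF i(1), of 4 X] pcA[OF i(1), of 3 X] pcA[OF i(1), of 1 X]
      by (simp add: off_def split: if_splits)
  qed
  have ml: "maximal_losing (4*m) (v2 m) (A m X)"
    unfolding maximal_losing_def
  proof (intro conjI allI impI)
    show "A m X \<subseteq> {1..4*m}" by (rule A_sub)
    show "\<not> v2 m (A m X)" using PA unfolding v2_def by blast
    fix T assume "A m X \<subset> T \<and> T \<subseteq> {1..4*m}"
    then show "v2 m T" using key2[of T m X] subset_dm[of "A m X" T] unfolding v2_def by blast
  qed
  have "v2 m S'" if "left_shift (4*m) (A m X) S'" for S'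
    using ls_sdm[OF that A_sub] key2[of S' m X] sdm_neq unfolding v2_def sdm_def by blast
  then show ?thesis using ml unfolding ceilings_def by blast
qed

lemma ceilings2_big: "2^m \<le> card (ceilings (4*m) (v2 m))"
proof -
  have "A m ` Pow {..<m} \<subseteq> ceilings (4*m) (v2 m)" using A_ceil2 by blast
  moreover have "finite (ceilings (4*m) (v2 m))"
    by (rule finite_subset[of _ "Pow {1..4*m}"]) (auto simp: ceilings_def maximal_losing_def)
  ultimately show ?thesis using card_A card_mono by metis
qed

lemma roof2_below:
  assumes S: "S \<in> roofs (4*m) (v2 m)" and T: "T \<subseteq> {1..4*m}" "dm S T" "T \<noteq> S"
  shows "\<not> P2 m T"
proof
  assume PT: "P2 m T"
  have Ss: "S \<subseteq> {1..4*m}" using S unfolding roofs_def minimal_winning_def by blast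
  obtain S' where S': "S' \<subset> S \<or> direct_right_shift (4*m) S S'" "dm S' T"
    using lower_cover[OF Ss T(1,2) T(3)[symmetric]] by blast
  have S'sub: "S' \<subseteq> {1..4*m}" using S'(1) Ss drs_sdm by blast
  have ml: "\<And>U. U \<subset> S \<Longrightarrow> \<not> v2 m U"
    and rs: "\<And>U. right_shift (4*m) S U \<Longrightarrow> \<not> v2 m U"
    using S unfolding roofs_def minimal_winning_def by blast+
  have "\<not> v2 m S'"
  proof (cases "S' \<subset> S")
    case True then show ?thesis using ml by blast
  next
    case False
    then have "direct_right_shift (4*m) S S'" using S'(1) by blast
    then show ?thesis using rs unfolding right_shift_def by (blast intro: tranclp.r_into_trancl)
  qed
  then show False using P2_mono[OF S'(2) PT] S'sub unfolding v2_def by blast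
qed

definition sat2 :: "nat \<times> bool \<Rightarrow> nat set \<Rightarrow> bool" where
  "sat2 c S = (case c of (i, b) \<Rightarrow>
     (if b then 2*i+2 \<le> pc S (4*i+3) \<and> 2*i+1 \<le> pc S (4*i+1) else 2*i+3 \<le> pc S (4*i+4)))"

lemma roofs2_small: "card (roofs (4*m) (v2 m)) \<le> 2*m"
proof -
  have "card (roofs (4*m) (v2 m)) \<le> card ({..<m} \<times> (UNIV :: bool set))"
  proof (rule few[where P = sat2])
    show "finite ({..<m} \<times> (UNIV :: bool set))" by simp
  next
    fix S assume "S \<in> roofs (4*m) (v2 m)"
    then have "P2 m S" unfolding roofs_def minimal_winning_def v2_def by blast
    then obtain i where "i < m" "2*i+3 \<le> pc S (4*i+4) \<or> (2*i+2 \<le> pc S (4*i+3) \<and> 2*i+1 \<le> pc S (4*i+1))"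
      unfolding P2_def by blast
    then show "\<exists>c\<in>{..<m} \<times> (UNIV :: bool set). sat2 c S"
      unfolding sat2_def by (metis (mono_tags, lifting) SigmaI UNIV_I case_prod_conv lessThan_iff)
  next
    fix c S S' assume h: "c \<in> {..<m} \<times> (UNIV :: bool set)" "S \<in> roofs (4*m) (v2 m)"
      "S' \<in> roofs (4*m) (v2 m)" "sat2 c S" "sat2 c S'"
    have Ss: "S \<subseteq> {1..4*m}" "S' \<subseteq> {1..4*m}" using h(2,3) unfolding roofs_def minimal_winning_def by blast+
    obtain J where J: "J \<subseteq> {1..4*m}" "\<forall>j. pc J j = min (pc S j) (pc S' j)" using meet_ex[OF Ss] by blast
    obtain i b where c: "c = (i, b)" by (cases c)
    have vJ: "sat2 c J" using h(4,5) J(2) unfolding sat2_def c by (auto simp del: pc.simps)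
    have nP: "P2 m J" using vJ h(1) unfolding sat2_def P2_def c by (auto simp del: pc.simps split: if_splits)
    have "dm S J" "dm S' J" using J(2) unfolding dm_def by auto
    then have "J = S" "J = S'" using roof2_below[OF h(2) J(1)] roof2_below[OF h(3) J(1)] nP by blast+
    then show "S = S'" by simp
  qed
  then show ?thesis by simp
qed


section \<open>Complexity\<close>

lemma out_len: "length (outputs M x t) \<le> t"
  by (induction t) (auto split: option.split)

lemma enc_len: "length L \<le> length (encode L)"
  by (induction L) (auto simp: encode_def)

lemma ow_card:
  assumes "outputs_within M x T R" "finite R"
  shows "card R \<le> T"
proof -
  obtain t L where h: "t \<le> T" "outputs M x t = encode L" "set L = R"
    using assms(1) unfolding outputs_within_def by blast
  have "card R \<le> length L" using h(3) card_length by blast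
  also have "\<dots> \<le> length (encode L)" by (rule enc_len)
  also have "\<dots> \<le> t" using out_len h(2) by metis
  finally show ?thesis using h(1) by simp
qed

lemma charvec_inj: "inj_on (charvec n) (Pow {1..n})"
proof (rule inj_onI)
  fix S T assume h: "S \<in> Pow {1..n}" "T \<in> Pow {1..n}" "charvec n S = charvec n T"
  have "\<forall>i\<in>set [1..<n+1]. (i \<in> S) = (i \<in> T)" using h(3) unfolding charvec_def
    by (simp add: map_eq_conv)
  moreover have e: "set [1..<n+1] = {1..n}" by auto
  ultimately have "\<forall>i\<in>{1..n}. (i \<in> S) = (i \<in> T)" by metis
  then show "S = T" using h(1,2) by blast
qed

lemma growth: "\<exists>m\<ge>1. c * (3*m+1)^e < (2::nat)^m"
proof -
  have "((\<lambda>m::nat. real c * (3 * real m + 1)^e / 2^m) \<longlongrightarrow> 0) sequentially"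
    by real_asymp
  then have "eventually (\<lambda>m::nat. real c * (3 * real m + 1)^e / 2^m < 1) sequentially"
    by (rule order_tendstoD) simp
  then have "eventually (\<lambda>m::nat. m \<ge> 1 \<and> real c * (3 * real m + 1)^e / 2^m < 1) sequentially"
    by (intro eventually_conj) (auto simp: eventually_sequentially)
  then obtain m where m: "m \<ge> 1" "real c * (3 * real m + 1)^e / 2^m < 1"
    by (auto simp: eventually_sequentially)
  then have "real c * (3 * real m + 1)^e < 2^m"
    by (metis divide_less_eq_1_pos zero_less_numeral zero_less_power)
  moreover have "real (c * (3*m+1)^e) = real c * (3 * real m + 1)^e" by (simp add: add.commute)
  moreover have "real ((2::nat)^m) = 2^m" by simp
  ultimately have "real (c * (3*m+1)^e) < real ((2::nat)^m)" by metis
  then have "c * (3*m+1)^e < (2::nat)^m" by (simp only: of_nat_less_iff)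
  then show ?thesis using m(1) by blast
qed

lemma transfer_bound:
  assumes hF1: "FA \<subseteq> Pow {1..n}" and hF2: "FB \<subseteq> Pow {1..n}" and n: "n = 4*m"
    and small: "card FA \<le> 2*m" and big: "2^m \<le> card FB"
    and hyp: "\<And>L. distinct L \<Longrightarrow> set L = charvec n ` FA \<Longrightarrow>
        outputs_within M (n, L) (c * (input_size (n, L) + 1) ^ d) (charvec n ` FB)"
  shows "2^m \<le> c * (3*m+1)^(2*d)"
proof -
  have fin1: "finite FA" using hF1 finite_subset by (metis finite_Pow_iff finite_atLeastAtMost)
  have fin2: "finite FB" using hF2 finite_subset by (metis finite_Pow_iff finite_atLeastAtMost)
  obtain L where L: "set L = charvec n ` FA" "distinct L"
    using finite_distinct_list[of "charvec n ` FA"] fin1 by blast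
  have lenL: "length L = card FA"
    using L distinct_card card_image inj_on_subset[OF charvec_inj hF1] by metis
  have lens: "\<forall>v\<in>set L. length v = n" using L(1) by (auto simp: charvec_def)
  have "sum_list (map length L) = n * length L"
    using lens by (induction L) auto
  then have s1: "sum_list (map length L) = 4 * (m * card FA)" using lenL n by simp
  have "m * card FA \<le> m * (2*m)" using small by (rule mult_le_mono2)
  then have "input_size (n, L) + 1 \<le> 4*m + 4*(m*(2*m)) + 1"
    unfolding input_size_def using s1 n by simp
  also have "\<dots> \<le> (3*m+1)^2" by (simp add: power2_eq_square algebra_simps)
  finally have isz: "input_size (n, L) + 1 \<le> (3*m+1)^2" .
  have "card (charvec n ` FB) \<le> c * (input_size (n, L) + 1) ^ d"
    using ow_card[OF hyp[OF L(2,1)]] fin2 by blast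
  moreover have "card (charvec n ` FB) = card FB"
    using card_image inj_on_subset[OF charvec_inj hF2] by blast
  moreover have "(input_size (n, L) + 1) ^ d \<le> ((3*m+1)^2) ^ d"
    by (rule power_mono[OF isz]) simp
  then have "c * (input_size (n, L) + 1) ^ d \<le> c * ((3*m+1)^2) ^ d"
    by (rule mult_le_mono2)
  moreover have "c * ((3*m+1)^2) ^ d = c * (3*m+1)^(2*d)" by (simp only: power_mult)
  ultimately show ?thesis using big by linarith
qed

theorem corollary4:
  shows "(\<nexists>M :: 's machine. poly_ceilings_to_roofs M) \<and>
         (\<nexists>M :: 's machine. poly_roofs_to_ceilings M)"
proof (intro conjI notI)
  assume "\<exists>M :: 's machine. poly_ceilings_to_roofs M"
  then obtain M :: "'s machine" and c d where h: "\<forall>n v L.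
     canonical_linear n v \<and> distinct L \<and> set L = charvec n ` ceilings n v \<longrightarrow>
     outputs_within M (n, L) (c * (input_size (n, L) + 1) ^ d) (charvec n ` roofs n v)"
    unfolding poly_ceilings_to_roofs_def by blast
  obtain m where m: "c * (3*m+1)^(2*d) < (2::nat)^m" using growth by blast
  have "2^m \<le> c * (3*m+1)^(2*d)"
  proof (rule transfer_bound[where n = "4*m" and FA = "ceilings (4*m) (v1 m)"
        and FB = "roofs (4*m) (v1 m)" and M = M])
    show "ceilings (4*m) (v1 m) \<subseteq> Pow {1..4*m}" by (auto simp: ceilings_def maximal_losing_def)
    show "roofs (4*m) (v1 m) \<subseteq> Pow {1..4*m}" by (auto simp: roofs_def minimal_winning_def)
  qed (use h v1_canon ceilings1_small roofs1_big in auto)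
  then show False using m by simp
next
  assume "\<exists>M :: 's machine. poly_roofs_to_ceilings M"
  then obtain M :: "'s machine" and c d where h: "\<forall>n v L.
     canonical_linear n v \<and> distinct L \<and> set L = charvec n ` roofs n v \<longrightarrow>
     outputs_within M (n, L) (c * (input_size (n, L) + 1) ^ d) (charvec n ` ceilings n v)"
    unfolding poly_roofs_to_ceilings_def by blast
  obtain m where m: "c * (3*m+1)^(2*d) < (2::nat)^m" using growth by blast
  have "2^m \<le> c * (3*m+1)^(2*d)"
  proof (rule transfer_bound[where n = "4*m" and FA = "roofs (4*m) (v2 m)"
        and FB = "ceilings (4*m) (v2 m)" and M = M])
    show "roofs (4*m) (v2 m) \<subseteq> Pow {1..4*m}" by (auto simp: roofs_def minimal_winning_def)
    show "ceilings (4*m) (v2 m) \<subseteq> Pow {1..4*m}" by (auto simp: ceilings_def maximal_losing_def)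
  qed (use h v2_canon roofs2_small ceilings2_big in auto)
  then show False using m by simp
qed

end
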